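(* Let $\nu$ be a class (ii) distribution with associated functions $f,\varphi,\Phi$, and let $\theta\ge1$. Let $\eta$ be a probability distribution on $[0,\infty)$ with density $g$ such that $g(x)\le1$ for all sufficiently large $x$ and such that $g/f$ is bounded on every compact interval. If $E_\eta[X^\theta]=\int_0^\infty x^\theta g(x)\,dx<\infty$, then $D_{F_\Phi}(\eta|\nu)<\infty$.
   Context: Densities are written $f=e^{-\varphi}$. For strictly convex $F$ with $F(1)=0$, $D_F(\eta|\nu)=\int_0^\infty F(g/f)f\,dx$ if $\eta\ll\nu$ and $+\infty$ otherwise. Class (ii): $\lim_{x\to\infty}\varphi(x)/x=0$, $\lim_{x\to\infty}\varphi(x)/\log x=\infty$, and there exist $\bar x>0$ and $\Phi:\mathbb R_+\to\mathbb R$ positive, strictly concave, twice differentiable and increasing on $[\bar x,\infty)$ such that, with $\Phi^{-1}$ the inverse of $\Phi|_{[\bar x,\infty)}$, $0<\liminf_{x\to\infty}\Phi^{-1}(\varphi(x))/x\le\limsup_{x\to\infty}\Phi^{-1}(\varphi(x))/x<\infty$. With $\bar y=\exp(\Phi(\bar x))$: $F_\Phi(y)=y\log y$ for $y\le\bar y$ and $F_\Phi(y)=a\,y\,\Phi^{-1}(\log y)^\theta+b$ for $y>\bar y$, where $a=\frac{1+\log\bar y}{\Phi^{-1}(\log\bar y)^\theta+\theta\Phi^{-1}(\log\bar y)^{\theta-1}(\Phi^{-1})'(\log\bar y)}$, $b=\bar y\log\bar y-a\bar y\Phi^{-1}(\log\bar y)^\theta$. *)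

theory Defs
  imports "HOL-Analysis.Analysis"
begin

definition Phi_inv :: "(real \<Rightarrow> real) \<Rightarrow> real \<Rightarrow> real \<Rightarrow> real" where
  "Phi_inv \<Phi> xbar = the_inv_into {xbar..} \<Phi>"

text \<open>The function F_Phi.  The argument dinv stands for the value of the derivative
  of Phi_inv at log ybar = Phi xbar (constrained by a hypothesis in the theorem).\<close>
definition F_Phi :: "(real \<Rightarrow> real) \<Rightarrow> real \<Rightarrow> real \<Rightarrow> real \<Rightarrow> real \<Rightarrow> real" where
  "F_Phi \<Phi> xbar \<theta> dinv y =
    (let yb = exp (\<Phi> xbar);
         Pi = Phi_inv \<Phi> xbar;
         a = (1 + ln yb) / (Pi (ln yb) powr \<theta> + \<theta> * Pi (ln yb) powr (\<theta> - 1) * dinv);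
         b = yb * ln yb - a * yb * Pi (ln yb) powr \<theta>
     in if y \<le> yb then y * ln y else a * y * Pi (ln y) powr \<theta> + b)"

end

theory Submission
  imports Defs
begin

lemma ylny_bound:
  fixes y Y :: real
  assumes "0 \<le> y" "y \<le> Y"
  shows "\<bar>y * ln y\<bar> \<le> 1 + Y^2"
proof (cases "y = 0")
  case True then show ?thesis by simp
next
  case False
  then have yp: "y > 0" using assms by simp
  have u: "ln y \<le> y - 1" using ln_le_minus_one[OF yp] .
  have l: "ln (1/y) \<le> 1/y - 1" using ln_le_minus_one yp by simp
  then have l2: "- ln y \<le> 1/y - 1" using yp by (simp add: ln_div)
  have "y * ln y \<le> y * (y - 1)" using u yp by (simp add: mult_left_mono)
  also have "\<dots> \<le> Y^2"
  proof -
    have "y * y \<le> Y * Y" using assms by (intro mult_mono) auto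
    then show ?thesis using yp by (simp add: power2_eq_square algebra_simps)
  qed
  finally have A: "y * ln y \<le> Y^2" .
  have "y * (- ln y) \<le> y * (1/y - 1)" using mult_left_mono[OF l2, of y] yp by simp
  also have "\<dots> = 1 - y" using yp by (simp add: field_simps)
  finally have B: "- (y * ln y) \<le> 1" using yp by simp
  show ?thesis using A B by (simp add: abs_le_iff) (smt (verit) zero_le_power2)
qed

theorem proposition4p4:
  fixes \<phi> f g \<Phi> \<Phi>' \<Phi>'' :: "real \<Rightarrow> real" and xbar \<theta> dinv :: real
  assumes f_def: "\<And>x. f x = exp (- \<phi> x)"
    and \<phi>_meas: "\<phi> \<in> borel_measurable borel"
    and f_prob: "set_integrable lborel {0..} f" "(\<integral>x\<in>{0..}. f x \<partial>lborel) = 1"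
    and \<phi>_lin: "((\<lambda>x. \<phi> x / x) \<longlongrightarrow> 0) at_top"
    and \<phi>_log: "filterlim (\<lambda>x. \<phi> x / ln x) at_top at_top"
    and xbar_pos: "xbar > 0"
    and \<Phi>_pos: "\<And>x. x \<ge> xbar \<Longrightarrow> \<Phi> x > 0"
    and \<Phi>_strict_concave: "\<And>x y t. x \<ge> xbar \<Longrightarrow> y \<ge> xbar \<Longrightarrow> x \<noteq> y \<Longrightarrow> 0 < t \<Longrightarrow> t < 1 \<Longrightarrow>
          \<Phi> ((1 - t) * x + t * y) > (1 - t) * \<Phi> x + t * \<Phi> y"
    and \<Phi>_deriv: "\<And>x. x \<ge> xbar \<Longrightarrow> (\<Phi> has_real_derivative \<Phi>' x) (at x within {xbar..})"
    and \<Phi>_deriv2: "\<And>x. x \<ge> xbar \<Longrightarrow> (\<Phi>' has_real_derivative \<Phi>'' x) (at x within {xbar..})"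
    and \<Phi>_incr: "strict_mono_on {xbar..} \<Phi>"
    and \<phi>_range: "eventually (\<lambda>x. \<phi> x \<in> \<Phi> ` {xbar..}) at_top"
    and liminf_pos: "Liminf at_top (\<lambda>x. ereal (Phi_inv \<Phi> xbar (\<phi> x) / x)) > 0"
    and limsup_fin: "Limsup at_top (\<lambda>x. ereal (Phi_inv \<Phi> xbar (\<phi> x) / x)) < \<infinity>"
    and dinv: "(Phi_inv \<Phi> xbar has_real_derivative dinv) (at (\<Phi> xbar) within {\<Phi> xbar..})"
    and \<theta>: "\<theta> \<ge> 1"
    and g_meas: "g \<in> borel_measurable borel"
    and g_nonneg: "\<And>x. x \<ge> 0 \<Longrightarrow> g x \<ge> 0"
    and g_prob: "set_integrable lborel {0..} g" "(\<integral>x\<in>{0..}. g x \<partial>lborel) = 1"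
    and g_le1: "eventually (\<lambda>x. g x \<le> 1) at_top"
    and gf_bdd: "\<And>c. \<exists>M. \<forall>x\<in>{0..c}. g x / f x \<le> M"
    and moment: "set_integrable lborel {0..} (\<lambda>x. x powr \<theta> * g x)"
  shows "set_integrable lborel {0..} (\<lambda>x. F_Phi \<Phi> xbar \<theta> dinv (g x / f x) * f x)"
proof -
  note [measurable] = \<phi>_meas g_meas
  define P where "P = Phi_inv \<Phi> xbar"
  define yb where "yb = exp (\<Phi> xbar)"
  have ybpos: "yb > 0" unfolding yb_def by simp
  have "\<exists>a b. \<forall>y. F_Phi \<Phi> xbar \<theta> dinv y = (if y \<le> yb then y * ln y else a * y * P (ln y) powr \<theta> + b)"
    unfolding F_Phi_def Let_def P_def yb_def by blast
  then obtain a b where F: "\<And>y. F_Phi \<Phi> xbar \<theta> dinv y = (if y \<le> yb then y * ln y else a * y * P (ln y) powr \<theta> + b)"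
    by blast
  have inj: "inj_on \<Phi> {xbar..}" using \<Phi>_incr by (rule strict_mono_on_imp_inj_on)
  have cont: "continuous_on {xbar..} \<Phi>"
    by (rule DERIV_continuous_on) (use \<Phi>_deriv in auto)
  have \<phi>_top: "filterlim \<phi> at_top at_top"
  proof (rule filterlim_at_top_mono[OF ln_at_top])
    have "eventually (\<lambda>x. \<phi> x / ln x \<ge> 1) at_top"
      using \<phi>_log by (simp add: filterlim_at_top)
    moreover have "eventually (\<lambda>x::real. x > 1) at_top" by (rule eventually_gt_at_top)
    ultimately show "eventually (\<lambda>x. ln x \<le> \<phi> x) at_top"
    proof eventually_elim
      case (elim x)
      then have "ln x > 0" by simp
      with elim show ?case by (simp add: field_simps)
    qed
  qed
  have range: "\<exists>u\<ge>xbar. \<Phi> u = t" if "t \<ge> \<Phi> xbar" for t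
  proof -
    have "eventually (\<lambda>x. \<phi> x \<ge> t) at_top"
      using \<phi>_top by (simp add: filterlim_at_top)
    from eventually_conj[OF this \<phi>_range]
    obtain N where "\<forall>x\<ge>N. \<phi> x \<ge> t \<and> \<phi> x \<in> \<Phi> ` {xbar..}"
      unfolding eventually_at_top_linorder by blast
    then obtain x where "\<phi> x \<ge> t" "\<phi> x \<in> \<Phi> ` {xbar..}" by blast
    then obtain u where u: "u \<ge> xbar" "\<Phi> u \<ge> t" by auto
    have "continuous_on {xbar..u} \<Phi>" using cont by (rule continuous_on_subset) auto
    from IVT'[of \<Phi> xbar t u, OF that u(2) u(1) this] show ?thesis by auto
  qed
  have Pin: "P t \<ge> xbar \<and> \<Phi> (P t) = t" if "t \<ge> \<Phi> xbar" for t
  proof -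
    have tr: "t \<in> \<Phi> ` {xbar..}" using range[OF that] by auto
    show ?thesis unfolding P_def Phi_inv_def
      using the_inv_into_into[OF inj tr order_refl] f_the_inv_into_f[OF inj tr] by auto
  qed
  have Pmono: "P s \<le> P t" if "\<Phi> xbar \<le> s" "s \<le> t" for s t
  proof (rule ccontr)
    assume "\<not> P s \<le> P t"
    then have "P t < P s" by simp
    moreover have "P s \<ge> xbar" "P t \<ge> xbar" using Pin[of s] Pin[of t] that by auto
    ultimately have "\<Phi> (P t) < \<Phi> (P s)"
      using \<Phi>_incr by (auto simp: strict_mono_on_def)
    then show False using Pin[of s] Pin[of t] that by simp
  qed
  define P0 where "P0 t = P (max t (\<Phi> xbar))" for t
  have "mono P0" unfolding P0_def mono_def by (auto intro!: Pmono)
  then have P0m[measurable]: "P0 \<in> borel_measurable borel" by (rule borel_measurable_mono)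
  have Feq: "F_Phi \<Phi> xbar \<theta> dinv = (\<lambda>y. if y \<le> yb then y * ln y else a * y * P0 (ln y) powr \<theta> + b)"
  proof (rule ext)
    fix y
    show "F_Phi \<Phi> xbar \<theta> dinv y = (if y \<le> yb then y * ln y else a * y * P0 (ln y) powr \<theta> + b)"
    proof (cases "y \<le> yb")
      case False
      then have "ln y > ln yb" using ybpos by simp
      then have "ln y > \<Phi> xbar" unfolding yb_def by simp
      then show ?thesis using False by (simp add: F P0_def)
    qed (simp add: F)
  qed
  have Fm[measurable]: "F_Phi \<Phi> xbar \<theta> dinv \<in> borel_measurable borel"
    unfolding Feq by measurable
  have fm[measurable]: "f \<in> borel_measurable borel"
  proof -
    have "f = (\<lambda>x. exp (- \<phi> x))" using f_def by auto
    moreover have "(\<lambda>x. exp (- \<phi> x)) \<in> borel_measurable borel" by measurable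
    ultimately show ?thesis by simp
  qed
  have fpos: "f x > 0" for x using f_def by simp
  have hm: "(\<lambda>x. F_Phi \<Phi> xbar \<theta> dinv (g x / f x) * f x) \<in> borel_measurable borel"
    by measurable
  define h where "h x = F_Phi \<Phi> xbar \<theta> dinv (g x / f x) * f x" for x
  obtain n :: nat where n: "Limsup at_top (\<lambda>x. ereal (P (\<phi> x) / x)) < ereal (real n)"
    using limsup_fin less_PInf_Ex_of_nat unfolding P_def by (metis less_irrefl)
  define C where "C = max (real n) 1"
  have Cpos: "C > 0" unfolding C_def by simp
  have "eventually (\<lambda>x. ereal (P (\<phi> x) / x) < ereal (real n)) at_top"
    using Limsup_lessD[OF n] .
  then have evC: "eventually (\<lambda>x. P (\<phi> x) / x < C) at_top"
    by eventually_elim (auto simp: C_def)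
  from eventually_conj[OF g_le1 evC]
  obtain N where N: "\<And>x. x \<ge> N \<Longrightarrow> g x \<le> 1 \<and> P (\<phi> x) / x < C"
    unfolding eventually_at_top_linorder by blast
  define c where "c = max N 1"
  obtain M where M: "\<forall>x\<in>{0..c}. g x / f x \<le> M" using gf_bdd by blast
  define M' where "M' = max M yb"
  define K where "K = 1 + yb^2"
  define Q where "Q = P (ln M') powr \<theta>"
  define D where "D x = (K + \<bar>b\<bar>) * f x + (\<bar>a\<bar> * Q) * g x + (\<bar>a\<bar> * C powr \<theta>) * (x powr \<theta> * g x)" for x
  have Dint: "set_integrable lborel {0..} D"
    unfolding D_def
    by (intro set_integral_add set_integrable_mult_right) (use f_prob g_prob moment in auto)
  have bound: "\<bar>h x\<bar> \<le> D x" if x0: "x \<ge> 0" for x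
  proof -
    define y where "y = g x / f x"
    have gx: "g x \<ge> 0" using g_nonneg x0 by simp
    have fx: "f x > 0" using fpos by simp
    have y0: "y \<ge> 0" unfolding y_def using gx fx by simp
    have yf: "y * f x = g x" unfolding y_def using fx by simp
    have nn1: "(\<bar>a\<bar> * Q) * g x \<ge> 0" unfolding Q_def using gx by simp
    have nn2: "(\<bar>a\<bar> * C powr \<theta>) * (x powr \<theta> * g x) \<ge> 0" using gx by simp
    show ?thesis
    proof (cases "y \<le> yb")
      case True
      have "h x = y * ln y * f x" unfolding h_def y_def[symmetric] using True by (simp add: F)
      then have "\<bar>h x\<bar> = \<bar>y * ln y\<bar> * f x" using fx by (simp add: abs_mult)
      also have "\<dots> \<le> K * f x" unfolding K_def
        using ylny_bound[OF y0 True] fx by (intro mult_right_mono) auto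
      also have "\<dots> \<le> D x" unfolding D_def using nn1 nn2 fx by (simp add: algebra_simps)
      finally show ?thesis .
    next
      case False
      define R where "R = P (ln y) powr \<theta>"
      have ypos: "y > 0" using False ybpos by simp
      have lny: "ln y > \<Phi> xbar"
      proof -
        have "ln y > ln yb" using False ybpos by simp
        then show ?thesis unfolding yb_def by simp
      qed
      have Ply: "P (ln y) \<ge> xbar" using Pin[of "ln y"] lny by simp
      have R: "R \<le> Q + C powr \<theta> * x powr \<theta>"
      proof (cases "x \<le> c")
        case True
        then have "y \<le> M'" using M x0 unfolding y_def M'_def by (meson atLeastAtMost_iff max.coboundedI1)
        then have "ln y \<le> ln M'" using ypos by simp
        then have "P (ln y) \<le> P (ln M')" using lny by (intro Pmono) auto
        then have "R \<le> Q" unfolding R_def Q_def using Ply xbar_pos \<theta>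
          by (intro powr_mono2) auto
        moreover have "C powr \<theta> * x powr \<theta> \<ge> 0" by simp
        ultimately show ?thesis by linarith
      next
        case False
        then have xN: "x \<ge> N" "x \<ge> 1" unfolding c_def by auto
        then have g1: "g x \<le> 1" and PC: "P (\<phi> x) / x < C" using N by auto
        have gpos: "g x > 0" using ypos fx unfolding y_def by (simp add: zero_less_divide_iff)
        have "ln y = ln (g x) - ln (f x)" unfolding y_def using gpos fx by (simp add: ln_div)
        also have "\<dots> = ln (g x) + \<phi> x" using f_def by simp
        also have "\<dots> \<le> \<phi> x" using g1 gpos by simp
        finally have "ln y \<le> \<phi> x" .
        then have "P (ln y) \<le> P (\<phi> x)" using lny by (intro Pmono) auto
        also have "\<dots> \<le> C * x" using PC xN by (simp add: divide_less_eq)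
        finally have "R \<le> (C * x) powr \<theta>" unfolding R_def using Ply xbar_pos \<theta>
          by (intro powr_mono2) auto
        also have "\<dots> = C powr \<theta> * x powr \<theta>" using Cpos x0 by (simp add: powr_mult)
        moreover have "Q \<ge> 0" unfolding Q_def by simp
        ultimately show ?thesis by linarith
      qed
      have "h x = (a * y * R + b) * f x" unfolding h_def y_def[symmetric] R_def using False by (simp add: F)
      also have "\<dots> = a * g x * R + b * f x" using yf by (simp add: algebra_simps)
      finally have e: "h x = a * g x * R + b * f x" .
      have R0: "R \<ge> 0" unfolding R_def by simp
      have "\<bar>h x\<bar> \<le> \<bar>a * g x * R\<bar> + \<bar>b * f x\<bar>" unfolding e by (rule abs_triangle_ineq)
      also have "\<dots> = \<bar>a\<bar> * g x * R + \<bar>b\<bar> * f x"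
        using gx fx R0 by (simp add: abs_mult)
      also have "\<dots> \<le> \<bar>a\<bar> * g x * (Q + C powr \<theta> * x powr \<theta>) + \<bar>b\<bar> * f x"
        using R gx by (simp add: mult_left_mono)
      also have "\<dots> \<le> D x" unfolding D_def K_def using fx by (simp add: algebra_simps)
      finally show ?thesis .
    qed
  qed
  show ?thesis
    unfolding set_integrable_def
  proof (rule Bochner_Integration.integrable_bound[OF Dint[unfolded set_integrable_def]])
    show "(\<lambda>x. indicator {0..} x *\<^sub>R (F_Phi \<Phi> xbar \<theta> dinv (g x / f x) * f x)) \<in> borel_measurable lborel"
      using hm by measurable
    show "AE x in lborel. norm (indicator {0..} x *\<^sub>R (F_Phi \<Phi> xbar \<theta> dinv (g x / f x) * f x))
        \<le> norm (indicator {0..} x *\<^sub>R D x)"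
    proof (rule AE_I2)
      fix x :: real
      show "norm (indicator {0..} x *\<^sub>R (F_Phi \<Phi> xbar \<theta> dinv (g x / f x) * f x))
        \<le> norm (indicator {0..} x *\<^sub>R D x)"
        using bound[of x] unfolding h_def by (auto simp: indicator_def)
    qed
  qed
qed

end
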